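(* Let $\mathcal{P}=\{X_i\mid i\in I\}$ be a partition of a set $X$. Then the quotient semigroup $\Sigma(X,\mathcal{P})/\chi$ is isomorphic to the semigroup of all surjective maps $I\to I$ (under composition).
   Context: Maps are written on the right and composed left to right ($x(fg)=(xf)g$). $T(X,\mathcal{P})=\{f\colon X\to X\mid \forall i\ \exists j:\ X_if\subseteq X_j\}$ (distinct indices for distinct blocks) and $\Sigma(X,\mathcal{P})=\{f\in T(X,\mathcal{P})\mid Xf\cap X_i\neq\emptyset\ \forall i\in I\}$, a subsemigroup. For $f\in T(X,\mathcal{P})$, $\chi^{(f)}\colon I\to I$ is defined by $i\chi^{(f)}=j$ whenever $X_if\subseteq X_j$. The relation $\chi$ on $\Sigma(X,\mathcal{P})$ defined by $(f,g)\in\chi\iff\chi^{(f)}=\chi^{(g)}$ is a congruence, and $\Sigma(X,\mathcal{P})/\chi$ is the corresponding quotient semigroup with $[f][g]=[fg]$. *)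

theory Defs
  imports "HOL-Algebra.Group" "HOL-Library.FuncSet"
begin

definition is_partition :: "'a set \<Rightarrow> ('i \<Rightarrow> 'a set) \<Rightarrow> 'i set \<Rightarrow> bool" where
  "is_partition X Xb I \<longleftrightarrow>
     (\<forall>i\<in>I. Xb i \<noteq> {}) \<and>
     (\<forall>i\<in>I. \<forall>j\<in>I. i \<noteq> j \<longrightarrow> Xb i \<inter> Xb j = {}) \<and>
     \<Union>(Xb ` I) = X"

text \<open>Maps are written on the right: x(fg) = (xf)g. Maps X -> X are represented
  extensionally (undefined outside X).\<close>
definition rcomp :: "'a set \<Rightarrow> ('a \<Rightarrow> 'a) \<Rightarrow> ('a \<Rightarrow> 'a) \<Rightarrow> ('a \<Rightarrow> 'a)" where
  "rcomp X f g = (\<lambda>x\<in>X. g (f x))"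

definition T_part :: "'a set \<Rightarrow> ('i \<Rightarrow> 'a set) \<Rightarrow> 'i set \<Rightarrow> ('a \<Rightarrow> 'a) set" where
  "T_part X Xb I = {f \<in> X \<rightarrow>\<^sub>E X. \<forall>i\<in>I. \<exists>j\<in>I. f ` Xb i \<subseteq> Xb j}"

definition Sigma_part :: "'a set \<Rightarrow> ('i \<Rightarrow> 'a set) \<Rightarrow> 'i set \<Rightarrow> ('a \<Rightarrow> 'a) set" where
  "Sigma_part X Xb I = {f \<in> T_part X Xb I. \<forall>i\<in>I. f ` X \<inter> Xb i \<noteq> {}}"

definition chi_map :: "('i \<Rightarrow> 'a set) \<Rightarrow> 'i set \<Rightarrow> ('a \<Rightarrow> 'a) \<Rightarrow> ('i \<Rightarrow> 'i)" where
  "chi_map Xb I f = (\<lambda>i\<in>I. THE j. j \<in> I \<and> f ` Xb i \<subseteq> Xb j)"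

definition chi_rel :: "'a set \<Rightarrow> ('i \<Rightarrow> 'a set) \<Rightarrow> 'i set \<Rightarrow> (('a \<Rightarrow> 'a) \<times> ('a \<Rightarrow> 'a)) set" where
  "chi_rel X Xb I = {(f, g). f \<in> Sigma_part X Xb I \<and> g \<in> Sigma_part X Xb I \<and>
                             chi_map Xb I f = chi_map Xb I g}"

text \<open>The quotient semigroup Sigma(X,P)/chi, with [f][g] = [fg].  The unit field is
  irrelevant (only the multiplication is used by hom/iso).\<close>
definition Sigma_quot :: "'a set \<Rightarrow> ('i \<Rightarrow> 'a set) \<Rightarrow> 'i set \<Rightarrow> ('a \<Rightarrow> 'a) set monoid" where
  "Sigma_quot X Xb I =
     \<lparr> carrier = Sigma_part X Xb I // chi_rel X Xb I,
       mult = (\<lambda>A B. \<Union>{chi_rel X Xb I `` {rcomp X f g} | f g. f \<in> A \<and> g \<in> B}),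
       one = undefined \<rparr>"

definition Surj_sg :: "'i set \<Rightarrow> ('i \<Rightarrow> 'i) monoid" where
  "Surj_sg I =
     \<lparr> carrier = {\<alpha> \<in> I \<rightarrow>\<^sub>E I. \<alpha> ` I = I},
       mult = (\<lambda>\<alpha> \<beta>. \<lambda>i\<in>I. \<beta> (\<alpha> i)),
       one = undefined \<rparr>"

end

theory Submission
  imports Defs
begin

lemma part_ne: "is_partition X Xb I \<Longrightarrow> i \<in> I \<Longrightarrow> \<exists>x. x \<in> Xb i"
  unfolding is_partition_def by auto

lemma part_disj: "is_partition X Xb I \<Longrightarrow> i \<in> I \<Longrightarrow> j \<in> I \<Longrightarrow> x \<in> Xb i \<Longrightarrow> x \<in> Xb j \<Longrightarrow> i = j"
  unfolding is_partition_def by auto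

lemma chi_spec:
  assumes P: "is_partition X Xb I" and f: "f \<in> T_part X Xb I" and i: "i \<in> I"
  shows "chi_map Xb I f i \<in> I \<and> f ` Xb i \<subseteq> Xb (chi_map Xb I f i)"
proof -
  obtain j where j: "j \<in> I" "f ` Xb i \<subseteq> Xb j" using f i unfolding T_part_def by blast
  have uniq: "k = j" if k: "k \<in> I" "f ` Xb i \<subseteq> Xb k" for k
  proof (rule ccontr)
    assume "k \<noteq> j"
    obtain x where x: "x \<in> Xb i" using part_ne[OF P i(1)] by blast
    have "f x \<in> Xb k" "f x \<in> Xb j" using x k(2) j(2) by blast+
    then show False using part_disj[OF P k(1) j(1)] \<open>k \<noteq> j\<close> by blast
  qed
  have "(THE j. j \<in> I \<and> f ` Xb i \<subseteq> Xb j) = j"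
  proof (rule the_equality)
    show "j \<in> I \<and> f ` Xb i \<subseteq> Xb j" using j by simp
    fix k assume "k \<in> I \<and> f ` Xb i \<subseteq> Xb k"
    then show "k = j" using uniq by blast
  qed
  then show ?thesis using i j unfolding chi_map_def by simp
qed

lemma chi_eq:
  assumes P: "is_partition X Xb I" and f: "f \<in> T_part X Xb I" and i: "i \<in> I"
    and j: "j \<in> I" and x: "x \<in> Xb i" and fx: "f x \<in> Xb j"
  shows "chi_map Xb I f i = j"
proof (rule ccontr)
  assume ne: "chi_map Xb I f i \<noteq> j"
  have "f x \<in> Xb (chi_map Xb I f i)" "chi_map Xb I f i \<in> I" using chi_spec[OF P f i] x by auto
  then show False using part_disj[OF P _ j _ fx] ne by blast
qed

lemma blk_sub: "is_partition X Xb I \<Longrightarrow> i \<in> I \<Longrightarrow> Xb i \<subseteq> X"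
  unfolding is_partition_def by blast

lemma blk_ex: "is_partition X Xb I \<Longrightarrow> x \<in> X \<Longrightarrow> \<exists>i\<in>I. x \<in> Xb i"
  unfolding is_partition_def by blast

lemma chi_ext: "chi_map Xb I f \<in> extensional I"
  unfolding chi_map_def by simp

lemma chi_surj:
  assumes P: "is_partition X Xb I" and f: "f \<in> Sigma_part X Xb I"
  shows "chi_map Xb I f \<in> carrier (Surj_sg I)"
proof -
  have fT: "f \<in> T_part X Xb I" using f unfolding Sigma_part_def by simp
  have "chi_map Xb I f ` I \<subseteq> I" using chi_spec[OF P fT] by auto
  moreover have "I \<subseteq> chi_map Xb I f ` I"
  proof
    fix k assume k: "k \<in> I"
    then obtain x where x: "x \<in> X" "f x \<in> Xb k" using f unfolding Sigma_part_def by blast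
    obtain i where i: "i \<in> I" "x \<in> Xb i" using blk_ex[OF P x(1)] by blast
    show "k \<in> chi_map Xb I f ` I" using chi_eq[OF P fT i(1) k i(2) x(2)] i by blast
  qed
  moreover have "chi_map Xb I f \<in> I \<rightarrow>\<^sub>E I"
    using chi_spec[OF P fT] chi_ext by (auto simp: PiE_iff)
  ultimately show ?thesis unfolding Surj_sg_def by auto
qed

lemma rcomp_T:
  assumes P: "is_partition X Xb I" and f: "f \<in> T_part X Xb I" and g: "g \<in> T_part X Xb I"
  shows "rcomp X f g \<in> T_part X Xb I"
    and "chi_map Xb I (rcomp X f g) = (\<lambda>i\<in>I. chi_map Xb I g (chi_map Xb I f i))"
proof -
  have fX: "f \<in> X \<rightarrow>\<^sub>E X" and gX: "g \<in> X \<rightarrow>\<^sub>E X" using f g unfolding T_part_def by auto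
  have img: "rcomp X f g ` Xb i \<subseteq> Xb (chi_map Xb I g (chi_map Xb I f i))"
     and inI: "chi_map Xb I g (chi_map Xb I f i) \<in> I" if i: "i \<in> I" for i
  proof -
    have a: "chi_map Xb I f i \<in> I" "f ` Xb i \<subseteq> Xb (chi_map Xb I f i)" using chi_spec[OF P f i] by auto
    have b: "chi_map Xb I g (chi_map Xb I f i) \<in> I" "g ` Xb (chi_map Xb I f i) \<subseteq> Xb (chi_map Xb I g (chi_map Xb I f i))"
      using chi_spec[OF P g a(1)] by auto
    show "rcomp X f g ` Xb i \<subseteq> Xb (chi_map Xb I g (chi_map Xb I f i))"
      using a b blk_sub[OF P i] unfolding rcomp_def by auto
    show "chi_map Xb I g (chi_map Xb I f i) \<in> I" by (rule b(1))
  qed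
  show T: "rcomp X f g \<in> T_part X Xb I"
  proof -
    have "rcomp X f g \<in> X \<rightarrow>\<^sub>E X" using fX gX unfolding rcomp_def by (auto simp: PiE_iff)
    then show ?thesis unfolding T_part_def using img inI by blast
  qed
  show "chi_map Xb I (rcomp X f g) = (\<lambda>i\<in>I. chi_map Xb I g (chi_map Xb I f i))"
  proof (rule ext)
    fix i show "chi_map Xb I (rcomp X f g) i = (\<lambda>i\<in>I. chi_map Xb I g (chi_map Xb I f i)) i"
    proof (cases "i \<in> I")
      case True
      obtain x where x: "x \<in> Xb i" using part_ne[OF P True] by blast
      show ?thesis using chi_eq[OF P T True inI[OF True] x] img[OF True] x True by auto
    next
      case False then show ?thesis unfolding chi_map_def by simp
    qed
  qed
qed

lemma rcomp_Sigma:
  assumes P: "is_partition X Xb I" and f: "f \<in> Sigma_part X Xb I" and g: "g \<in> Sigma_part X Xb I"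
  shows "rcomp X f g \<in> Sigma_part X Xb I"
proof -
  have fT: "f \<in> T_part X Xb I" and gT: "g \<in> T_part X Xb I" using f g unfolding Sigma_part_def by auto
  have fX: "f \<in> X \<rightarrow>\<^sub>E X" using fT unfolding T_part_def by auto
  have "rcomp X f g ` X \<inter> Xb k \<noteq> {}" if k: "k \<in> I" for k
  proof -
    obtain y where y: "y \<in> X" "g y \<in> Xb k" using g k unfolding Sigma_part_def by blast
    obtain j where j: "j \<in> I" "y \<in> Xb j" using blk_ex[OF P y(1)] by blast
    obtain x where x: "x \<in> X" "f x \<in> Xb j" using f j unfolding Sigma_part_def by blast
    have c: "chi_map Xb I g j = k" using chi_eq[OF P gT j(1) k j(2) y(2)] .
    have "g (f x) \<in> Xb k" using chi_spec[OF P gT j(1)] c x(2) by auto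
    then show ?thesis using x(1) unfolding rcomp_def by auto
  qed
  then show ?thesis using rcomp_T(1)[OF P fT gT] unfolding Sigma_part_def by auto
qed

lemma realize:
  assumes P: "is_partition X Xb I" and a: "\<alpha> \<in> carrier (Surj_sg I)"
  shows "\<exists>f\<in>Sigma_part X Xb I. chi_map Xb I f = \<alpha>"
proof -
  have aI: "\<alpha> \<in> I \<rightarrow>\<^sub>E I" "\<alpha> ` I = I" using a unfolding Surj_sg_def by auto
  have aI': "\<alpha> i \<in> I" if "i \<in> I" for i using aI(1) that by (simp add: PiE_iff)
  have ne: "Xb i \<noteq> {}" if "i \<in> I" for i using part_ne[OF P that] by blast
  define blk where "blk x = (THE i. i \<in> I \<and> x \<in> Xb i)" for x
  have blk: "blk x = i" if "i \<in> I" "x \<in> Xb i" for i x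
    unfolding blk_def
  proof (rule the_equality)
    show "i \<in> I \<and> x \<in> Xb i" using that by simp
    fix j assume "j \<in> I \<and> x \<in> Xb j"
    then show "j = i" using part_disj[OF P _ that(1) _ that(2)] by blast
  qed
  define f where "f = (\<lambda>x\<in>X. SOME y. y \<in> Xb (\<alpha> (blk x)))"
  have fx: "f x \<in> Xb (\<alpha> i)" if "i \<in> I" "x \<in> Xb i" for i x
  proof -
    have "Xb (\<alpha> i) \<noteq> {}" using ne aI' that(1) by simp
    then have "\<exists>y. y \<in> Xb (\<alpha> i)" by blast
    then have "(SOME y. y \<in> Xb (\<alpha> i)) \<in> Xb (\<alpha> i)" by (rule someI_ex)
    moreover have "x \<in> X" using that blk_sub[OF P that(1)] by blast
    ultimately show ?thesis unfolding f_def using blk[OF that] by simp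
  qed
  have fT: "f \<in> T_part X Xb I"
  proof -
    have "f \<in> X \<rightarrow>\<^sub>E X"
    proof
      fix x assume "x \<in> X"
      then obtain i where i: "i \<in> I" "x \<in> Xb i" using blk_ex[OF P] by blast
      have "f x \<in> Xb (\<alpha> i)" by (rule fx[OF i])
      moreover have "Xb (\<alpha> i) \<subseteq> X" using blk_sub[OF P aI'[OF i(1)]] .
      ultimately show "f x \<in> X" by blast
    qed (simp add: f_def)
    moreover have "\<forall>i\<in>I. \<exists>j\<in>I. f ` Xb i \<subseteq> Xb j"
    proof
      fix i assume i: "i \<in> I"
      have "f ` Xb i \<subseteq> Xb (\<alpha> i)" using fx[OF i] by blast
      then show "\<exists>j\<in>I. f ` Xb i \<subseteq> Xb j" using aI'[OF i] by blast
    qed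
    ultimately show ?thesis unfolding T_part_def by simp
  qed
  have "f ` X \<inter> Xb k \<noteq> {}" if k: "k \<in> I" for k
  proof -
    obtain i where i: "i \<in> I" "\<alpha> i = k" using aI k by (metis imageE)
    obtain x where x: "x \<in> Xb i" using part_ne[OF P i(1)] by blast
    have "x \<in> X" using x blk_sub[OF P i(1)] by blast
    moreover have "f x \<in> Xb k" using fx[OF i(1) x] i(2) by simp
    ultimately show ?thesis by blast
  qed
  then have fS: "f \<in> Sigma_part X Xb I" using fT unfolding Sigma_part_def by auto
  have "chi_map Xb I f = \<alpha>"
  proof (rule ext)
    fix i show "chi_map Xb I f i = \<alpha> i"
    proof (cases "i \<in> I")
      case True
      obtain x where x: "x \<in> Xb i" using part_ne[OF P True] by blast
      show ?thesis using chi_eq[OF P fT True aI'[OF True] x fx[OF True x]] .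
    next
      case False then show ?thesis using aI unfolding chi_map_def by auto
    qed
  qed
  then show ?thesis using fS by blast
qed

lemma cls:
  "f \<in> Sigma_part X Xb I \<Longrightarrow> chi_rel X Xb I `` {f} = {g \<in> Sigma_part X Xb I. chi_map Xb I g = chi_map Xb I f}"
  unfolding chi_rel_def by auto

theorem lemma3p8:
  fixes X :: "'a set" and Xb :: "'i \<Rightarrow> 'a set" and I :: "'i set"
  assumes "is_partition X Xb I"
  shows "Sigma_quot X Xb I \<cong> Surj_sg I"
proof -
  note P = assms
  let ?S = "Sigma_part X Xb I"
  let ?c = "chi_map Xb I"
  let ?cl = "\<lambda>f. {g \<in> ?S. ?c g = ?c f}"
  have car: "carrier (Sigma_quot X Xb I) = ?cl ` ?S"
  proof -
    have "carrier (Sigma_quot X Xb I) = (\<lambda>f. chi_rel X Xb I `` {f}) ` ?S"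
      unfolding Sigma_quot_def quotient_def by auto
    also have "\<dots> = ?cl ` ?S"
    proof (rule image_cong)
      fix f assume "f \<in> ?S"
      then show "chi_rel X Xb I `` {f} = ?cl f" by (rule cls)
    qed (rule refl)
    finally show ?thesis .
  qed
  define h where "h A = ?c (SOME f. f \<in> A)" for A
  have hcl: "h (?cl f) = ?c f" if "f \<in> ?S" for f
  proof -
    have "f \<in> ?cl f" using that by simp
    then have "(SOME g. g \<in> ?cl f) \<in> ?cl f" by (rule someI[of "\<lambda>g. g \<in> ?cl f"])
    then show ?thesis unfolding h_def by simp
  qed
  have mul: "mult (Sigma_quot X Xb I) (?cl f) (?cl g) = ?cl (rcomp X f g)"
    if f: "f \<in> ?S" and g: "g \<in> ?S" for f g
  proof -
    have fT: "f \<in> T_part X Xb I" and gT: "g \<in> T_part X Xb I" using f g unfolding Sigma_part_def by auto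
    have e: "chi_rel X Xb I `` {rcomp X f' g'} = ?cl (rcomp X f g)"
      if "f' \<in> ?cl f" "g' \<in> ?cl g" for f' g'
    proof -
      have "f' \<in> T_part X Xb I" "g' \<in> T_part X Xb I" using that unfolding Sigma_part_def by auto
      then have "?c (rcomp X f' g') = ?c (rcomp X f g)"
        using rcomp_T(2)[OF P fT gT] rcomp_T(2)[OF P \<open>f' \<in> T_part X Xb I\<close> \<open>g' \<in> T_part X Xb I\<close>] that by simp
      moreover have "rcomp X f' g' \<in> ?S" using rcomp_Sigma[OF P, of f' g'] that by simp
      ultimately show ?thesis using cls[of "rcomp X f' g'" X Xb I] by simp
    qed
    have mf: "f \<in> ?cl f" and mg: "g \<in> ?cl g" using f g by simp_all
    have "{chi_rel X Xb I `` {rcomp X f' g'} | f' g'. f' \<in> ?cl f \<and> g' \<in> ?cl g} = {?cl (rcomp X f g)}"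
    proof (rule Set.set_eqI)
      fix Z
      have "Z \<in> {chi_rel X Xb I `` {rcomp X f' g'} | f' g'. f' \<in> ?cl f \<and> g' \<in> ?cl g}
         \<longleftrightarrow> (\<exists>f' g'. Z = chi_rel X Xb I `` {rcomp X f' g'} \<and> f' \<in> ?cl f \<and> g' \<in> ?cl g)"
        by (rule mem_Collect_eq)
      also have "\<dots> \<longleftrightarrow> Z = ?cl (rcomp X f g)"
      proof
        assume "\<exists>f' g'. Z = chi_rel X Xb I `` {rcomp X f' g'} \<and> f' \<in> ?cl f \<and> g' \<in> ?cl g"
        then obtain f' g' where "Z = chi_rel X Xb I `` {rcomp X f' g'}" "f' \<in> ?cl f" "g' \<in> ?cl g" by blast
        then show "Z = ?cl (rcomp X f g)" using e by simp
      next
        assume "Z = ?cl (rcomp X f g)"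
        then have "Z = chi_rel X Xb I `` {rcomp X f g}" using e[OF mf mg] by simp
        then show "\<exists>f' g'. Z = chi_rel X Xb I `` {rcomp X f' g'} \<and> f' \<in> ?cl f \<and> g' \<in> ?cl g"
          using mf mg by blast
      qed
      finally show "Z \<in> {chi_rel X Xb I `` {rcomp X f' g'} | f' g'. f' \<in> ?cl f \<and> g' \<in> ?cl g} \<longleftrightarrow> Z \<in> {?cl (rcomp X f g)}"
        by simp
    qed
    then show ?thesis unfolding Sigma_quot_def by simp
  qed
  have "h \<in> iso (Sigma_quot X Xb I) (Surj_sg I)"
    unfolding iso_iff
  proof (intro conjI)
    show "h \<in> hom (Sigma_quot X Xb I) (Surj_sg I)"
      unfolding hom_def
    proof (intro CollectI conjI ballI)
      show "h \<in> carrier (Sigma_quot X Xb I) \<rightarrow> carrier (Surj_sg I)"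
      proof (rule Pi_I)
        fix A assume "A \<in> carrier (Sigma_quot X Xb I)"
        then obtain f where f: "f \<in> ?S" "A = ?cl f" using car by auto
        show "h A \<in> carrier (Surj_sg I)" using hcl[OF f(1)] chi_surj[OF P f(1)] f(2) by simp
      qed
      fix A B assume A: "A \<in> carrier (Sigma_quot X Xb I)" and B: "B \<in> carrier (Sigma_quot X Xb I)"
      obtain f where f: "f \<in> ?S" "A = ?cl f" using A car by auto
      obtain g where g: "g \<in> ?S" "B = ?cl g" using B car by auto
      have fT: "f \<in> T_part X Xb I" and gT: "g \<in> T_part X Xb I" using f g unfolding Sigma_part_def by auto
      show "h (A \<otimes>\<^bsub>Sigma_quot X Xb I\<^esub> B) = h A \<otimes>\<^bsub>Surj_sg I\<^esub> h B"
        using mul[OF f(1) g(1)] hcl[OF rcomp_Sigma[OF P f(1) g(1)]] hcl[OF f(1)] hcl[OF g(1)]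
          rcomp_T(2)[OF P fT gT] f(2) g(2) by (simp add: Surj_sg_def)
    qed
    show "h ` carrier (Sigma_quot X Xb I) = carrier (Surj_sg I)"
    proof
      show "h ` carrier (Sigma_quot X Xb I) \<subseteq> carrier (Surj_sg I)"
      proof
        fix a assume "a \<in> h ` carrier (Sigma_quot X Xb I)"
        then obtain A where A: "A \<in> carrier (Sigma_quot X Xb I)" "a = h A" by blast
        then obtain f where f: "f \<in> ?S" "A = ?cl f" using car by auto
        show "a \<in> carrier (Surj_sg I)" using hcl[OF f(1)] chi_surj[OF P f(1)] f(2) A(2) by simp
      qed
      show "carrier (Surj_sg I) \<subseteq> h ` carrier (Sigma_quot X Xb I)"
      proof
        fix a assume "a \<in> carrier (Surj_sg I)"
        then obtain f where f: "f \<in> ?S" "?c f = a" using realize[OF P] by blast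
        have "?cl f \<in> carrier (Sigma_quot X Xb I)" using car f(1) by simp
        moreover have "a = h (?cl f)" using hcl[OF f(1)] f(2) by simp
        ultimately show "a \<in> h ` carrier (Sigma_quot X Xb I)" by blast
      qed
    qed
    show "inj_on h (carrier (Sigma_quot X Xb I))"
    proof (rule inj_onI)
      fix A B assume A: "A \<in> carrier (Sigma_quot X Xb I)" and B: "B \<in> carrier (Sigma_quot X Xb I)"
        and e: "h A = h B"
      obtain f where f: "f \<in> ?S" "A = ?cl f" using A car by auto
      obtain g where g: "g \<in> ?S" "B = ?cl g" using B car by auto
      show "A = B" using e f g hcl[OF f(1)] hcl[OF g(1)] by simp
    qed
  qed
  then show ?thesis by (rule is_isoI)
qed

end
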